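(* Let $\nabla$ be a connection on an anchored vector bundle $(A,a_A)$ over $M$, let $[x,y]^\nabla=\nabla_xy-\nabla_yx$ and $R^\nabla(x,y)z=\nabla_x\nabla_yz-\nabla_y\nabla_xz-\nabla_{[x,y]^\nabla}z$. Then $(A,[\cdot,\cdot]^\nabla,a_A)$ is a Lie algebroid if and only if $$R^\nabla(x,y)z+R^\nabla(y,z)x+R^\nabla(z,x)y=0\quad\text{for all }x,y,z\in\Gamma(A).$$
   Context: A connection on the anchored bundle $(A,a_A)$ (with $a_A:A\to TM$ a bundle map) is an $\mathbb{R}$-bilinear operator $\nabla:\Gamma(A)\times\Gamma(A)\to\Gamma(A)$ with $\nabla_{fx}y=f\nabla_xy$ and $\nabla_x(fy)=a_A(x)(f)\,y+f\nabla_xy$. A Lie algebroid $(A,[\cdot,\cdot],a_A)$ is a skew-symmetric $\mathbb{R}$-bilinear bracket on $\Gamma(A)$ with $[x,fy]=f[x,y]+a_A(x)(f)y$ that satisfies the Jacobi identity. *)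

theory Defs
  imports Complex_Main
begin

text \<open>Algebraic rendering: C-infinity(M) is an abstract commutative real algebra 'f,
  Gamma(A) is a module over it (scalar action smul), the anchor a sends a section
  to a derivation of 'f (= a vector field), C-infinity(M)-linearly in the section.\<close>

definition derivation :: "('f::{real_algebra_1,comm_ring_1} \<Rightarrow> 'f) \<Rightarrow> bool" where
  "derivation D \<longleftrightarrow> linear D \<and> (\<forall>f g. D (f * g) = f * D g + g * D f)"

definition anchored_module ::
  "('f::{real_algebra_1,comm_ring_1} \<Rightarrow> 's::ab_group_add \<Rightarrow> 's) \<Rightarrow> ('s \<Rightarrow> 'f \<Rightarrow> 'f) \<Rightarrow> bool" where
  "anchored_module smul a \<longleftrightarrow>
     module smul \<and>
     (\<forall>x. derivation (a x)) \<and>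
     (\<forall>x y. a (x + y) = (\<lambda>g. a x g + a y g)) \<and>
     (\<forall>f x. a (smul f x) = (\<lambda>g. f * a x g))"

text \<open>R-bilinearity; real scalars act on sections as constant functions.\<close>
definition rbilinear ::
  "('f::{real_algebra_1,comm_ring_1} \<Rightarrow> 's::ab_group_add \<Rightarrow> 's) \<Rightarrow> ('s \<Rightarrow> 's \<Rightarrow> 's) \<Rightarrow> bool" where
  "rbilinear smul B \<longleftrightarrow>
     (\<forall>x y z. B (x + y) z = B x z + B y z) \<and>
     (\<forall>x y z. B x (y + z) = B x y + B x z) \<and>
     (\<forall>(c::real) x y. B (smul (of_real c) x) y = smul (of_real c) (B x y)) \<and>
     (\<forall>(c::real) x y. B x (smul (of_real c) y) = smul (of_real c) (B x y))"

definition connection ::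
  "('f::{real_algebra_1,comm_ring_1} \<Rightarrow> 's::ab_group_add \<Rightarrow> 's) \<Rightarrow> ('s \<Rightarrow> 'f \<Rightarrow> 'f)
     \<Rightarrow> ('s \<Rightarrow> 's \<Rightarrow> 's) \<Rightarrow> bool" where
  "connection smul a nabla \<longleftrightarrow>
     rbilinear smul nabla \<and>
     (\<forall>f x y. nabla (smul f x) y = smul f (nabla x y)) \<and>
     (\<forall>f x y. nabla x (smul f y) = smul (a x f) y + smul f (nabla x y))"

definition lie_algebroid ::
  "('f::{real_algebra_1,comm_ring_1} \<Rightarrow> 's::ab_group_add \<Rightarrow> 's) \<Rightarrow> ('s \<Rightarrow> 's \<Rightarrow> 's)
     \<Rightarrow> ('s \<Rightarrow> 'f \<Rightarrow> 'f) \<Rightarrow> bool" where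
  "lie_algebroid smul br a \<longleftrightarrow>
     anchored_module smul a \<and>
     rbilinear smul br \<and>
     (\<forall>x y. br x y = - br y x) \<and>
     (\<forall>f x y. br x (smul f y) = smul f (br x y) + smul (a x f) y) \<and>
     (\<forall>x y z. br x (br y z) + br y (br z x) + br z (br x y) = 0)"

definition conn_bracket :: "('s::ab_group_add \<Rightarrow> 's \<Rightarrow> 's) \<Rightarrow> 's \<Rightarrow> 's \<Rightarrow> 's" where
  "conn_bracket nabla x y = nabla x y - nabla y x"

definition curvature :: "('s::ab_group_add \<Rightarrow> 's \<Rightarrow> 's) \<Rightarrow> 's \<Rightarrow> 's \<Rightarrow> 's \<Rightarrow> 's" where
  "curvature nabla x y z =
     nabla x (nabla y z) - nabla y (nabla x z) - nabla (conn_bracket nabla x y) z"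

end

theory Submission
  imports Defs
begin

theorem proposition2p7:
  fixes smul :: "'f::{real_algebra_1,comm_ring_1} \<Rightarrow> 's::ab_group_add \<Rightarrow> 's"
    and a :: "'s \<Rightarrow> 'f \<Rightarrow> 'f"
    and nabla :: "'s \<Rightarrow> 's \<Rightarrow> 's"
  assumes "anchored_module smul a"
    and "connection smul a nabla"
  shows "lie_algebroid smul (conn_bracket nabla) a \<longleftrightarrow>
    (\<forall>x y z. curvature nabla x y z + curvature nabla y z x + curvature nabla z x y = 0)"
proof -
  have m: "module smul" using assms(1) by (simp add: anchored_module_def)
  have rb: "rbilinear smul nabla" and c1: "\<And>f x y. nabla (smul f x) y = smul f (nabla x y)"
    and c2: "\<And>f x y. nabla x (smul f y) = smul (a x f) y + smul f (nabla x y)"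
    using assms(2) by (auto simp: connection_def)
  have sd: "\<And>f u v. smul f (u - v) = smul f u - smul f v"
    using m by (simp add: module.scale_right_diff_distrib)
  have add2: "\<And>x u v. nabla x (u + v) = nabla x u + nabla x v"
    using rb by (simp add: rbilinear_def)
  have nd: "\<And>x u v. nabla x (u - v) = nabla x u - nabla x v"
  proof -
    fix x u v
    have "nabla x (u - v) + nabla x v = nabla x u" using add2[of x "u - v" v] by simp
    then show "nabla x (u - v) = nabla x u - nabla x v" by (metis eq_diff_eq)
  qed
  have J: "\<And>x y z. conn_bracket nabla x (conn_bracket nabla y z) + conn_bracket nabla y (conn_bracket nabla z x)
      + conn_bracket nabla z (conn_bracket nabla x y)
      = curvature nabla x y z + curvature nabla y z x + curvature nabla z x y"
    unfolding conn_bracket_def curvature_def nd by (simp add: algebra_simps)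
  have rbb: "rbilinear smul (conn_bracket nabla)"
    using rb unfolding rbilinear_def conn_bracket_def by (simp add: sd algebra_simps)
  have sk: "\<And>x y. conn_bracket nabla x y = - conn_bracket nabla y x"
    by (simp add: conn_bracket_def)
  have lb: "\<And>f x y. conn_bracket nabla x (smul f y) = smul f (conn_bracket nabla x y) + smul (a x f) y"
    by (simp add: conn_bracket_def c1 c2 sd algebra_simps)
  show ?thesis
  proof
    assume "lie_algebroid smul (conn_bracket nabla) a"
    then show "\<forall>x y z. curvature nabla x y z + curvature nabla y z x + curvature nabla z x y = 0"
      unfolding lie_algebroid_def using J by metis
  next
    assume h: "\<forall>x y z. curvature nabla x y z + curvature nabla y z x + curvature nabla z x y = 0"
    show "lie_algebroid smul (conn_bracket nabla) a"
      unfolding lie_algebroid_def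
    proof (intro conjI allI)
      fix x y z
      show "conn_bracket nabla x (conn_bracket nabla y z) + conn_bracket nabla y (conn_bracket nabla z x)
        + conn_bracket nabla z (conn_bracket nabla x y) = 0" using J h by metis
    qed (use assms(1) rbb sk lb in blast)+
  qed
qed

end
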